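(* Let $\mathbb{A}$ be as below, $S\subseteq\mathbb{A}$ finite, and $\mathcal{O}\subseteq\mathbb{A}^I$ an $S$-ordered orbit. Then every $a\in\mathcal{O}$ can be extended to an $\mathcal{O}$-duo $a\parallel b$, i.e. there is $b\in\mathcal{O}$ such that $a\parallel b$ is an $\mathcal{O}$-duo.
   Context: $\sigma_0$ is a finite vocabulary of unary and binary relations; $\mathscr{C}_0=\operatorname{Forb}(\mathscr{F})$ is a free amalgamation class of finite irreflexive $\sigma_0$-structures (every member of $\mathscr{F}$ has every two elements related, where $u,v$ are related if $u=v$ or $R(u,v)$ or $R(v,u)$ for some binary $R\in\sigma_0$; irreflexive means binary relations hold only between distinct elements); $\mathbb{A}$ is the Fraïssé limit of the class of all totally ordered (by a new symbol $<$) members of $\mathscr{C}_0$. $I$ is a finite totally ordered index set. For finite $S\subseteq\mathbb{A}$, a tuple $a\in\mathbb{A}^I$ is $S$-ordered if $a_i\notin S$ for all $i$ and $a_i<a_j$ whenever $i<j$; an $S$-ordered orbit is $\mathcal{O}=\operatorname{Aut}(\mathbb{A}/S)\cdot a$ for such $a$, where $\operatorname{Aut}(\mathbb{A}/S)$ is the group of automorphisms fixing $S$ pointwise. An $\mathcal{O}$-duo $a\parallel b$ is a pair $a,b\in\mathcal{O}$ with (1) $a_i<b_i$ for all $i\in I$; (2) $b_i<a_j$ for all $i<j$ in $I$; (3) for every binary $R\in\sigma_0$ and $i,j\in I$: $R(a_i,b_j)\iff R(a_i,a_j)\iff R(b_i,b_j)\iff R(b_i,a_j)$. *)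

theory Defs
  imports Main "HOL-Library.FuncSet" "HOL-Library.Countable_Set"
begin

text \<open>Finite structures (members of F, members of the age) are represented on carriers
of natural numbers, which is no loss since every finite structure is isomorphic
to one of these.\<close>

definition emb ::
  "nat set \<Rightarrow> ('u \<Rightarrow> nat \<Rightarrow> bool) \<Rightarrow> ('r \<Rightarrow> nat \<Rightarrow> nat \<Rightarrow> bool) \<Rightarrow>
   'a set \<Rightarrow> ('u \<Rightarrow> 'a \<Rightarrow> bool) \<Rightarrow> ('r \<Rightarrow> 'a \<Rightarrow> 'a \<Rightarrow> bool) \<Rightarrow> (nat \<Rightarrow> 'a) \<Rightarrow> bool" where
  "emb C U R A UA RA h \<longleftrightarrow> inj_on h C \<and> h ` C \<subseteq> A \<and>
     (\<forall>u. \<forall>x\<in>C. U u x \<longleftrightarrow> UA u (h x)) \<and>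
     (\<forall>r. \<forall>x\<in>C. \<forall>y\<in>C. R r x y \<longleftrightarrow> RA r (h x) (h y))"

definition emb_ord ::
  "nat set \<Rightarrow> ('u \<Rightarrow> nat \<Rightarrow> bool) \<Rightarrow> ('r \<Rightarrow> nat \<Rightarrow> nat \<Rightarrow> bool) \<Rightarrow> (nat \<Rightarrow> nat \<Rightarrow> bool) \<Rightarrow>
   'a set \<Rightarrow> ('u \<Rightarrow> 'a \<Rightarrow> bool) \<Rightarrow> ('r \<Rightarrow> 'a \<Rightarrow> 'a \<Rightarrow> bool) \<Rightarrow> ('a \<Rightarrow> 'a \<Rightarrow> bool) \<Rightarrow>
   (nat \<Rightarrow> 'a) \<Rightarrow> bool" where
  "emb_ord C U R L A UA RA lt h \<longleftrightarrow> emb C U R A UA RA h \<and>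
     (\<forall>x\<in>C. \<forall>y\<in>C. L x y \<longleftrightarrow> lt (h x) (h y))"

definition all_related :: "nat set \<Rightarrow> ('r \<Rightarrow> nat \<Rightarrow> nat \<Rightarrow> bool) \<Rightarrow> bool" where
  "all_related C R \<longleftrightarrow> (\<forall>x\<in>C. \<forall>y\<in>C. x = y \<or> (\<exists>r. R r x y \<or> R r y x))"

definition in_Forb ::
  "(nat set \<times> ('u \<Rightarrow> nat \<Rightarrow> bool) \<times> ('r \<Rightarrow> nat \<Rightarrow> nat \<Rightarrow> bool)) set \<Rightarrow>
   nat set \<Rightarrow> ('u \<Rightarrow> nat \<Rightarrow> bool) \<Rightarrow> ('r \<Rightarrow> nat \<Rightarrow> nat \<Rightarrow> bool) \<Rightarrow> bool" where
  "in_Forb F C U R \<longleftrightarrow> finite C \<and> (\<forall>r. \<forall>x\<in>C. \<not> R r x x) \<and>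
     (\<forall>(C', U', R')\<in>F. \<not> (\<exists>h. emb C' U' R' C U R h))"

definition in_ordK ::
  "(nat set \<times> ('u \<Rightarrow> nat \<Rightarrow> bool) \<times> ('r \<Rightarrow> nat \<Rightarrow> nat \<Rightarrow> bool)) set \<Rightarrow>
   nat set \<Rightarrow> ('u \<Rightarrow> nat \<Rightarrow> bool) \<Rightarrow> ('r \<Rightarrow> nat \<Rightarrow> nat \<Rightarrow> bool) \<Rightarrow> (nat \<Rightarrow> nat \<Rightarrow> bool) \<Rightarrow> bool" where
  "in_ordK F C U R L \<longleftrightarrow> in_Forb F C U R \<and>
     (\<forall>x\<in>C. \<not> L x x) \<and>
     (\<forall>x\<in>C. \<forall>y\<in>C. \<forall>z\<in>C. L x y \<and> L y z \<longrightarrow> L x z) \<and>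
     (\<forall>x\<in>C. \<forall>y\<in>C. x \<noteq> y \<longrightarrow> L x y \<or> L y x)"

definition is_aut ::
  "'a set \<Rightarrow> ('u \<Rightarrow> 'a \<Rightarrow> bool) \<Rightarrow> ('r \<Rightarrow> 'a \<Rightarrow> 'a \<Rightarrow> bool) \<Rightarrow> ('a \<Rightarrow> 'a \<Rightarrow> bool) \<Rightarrow>
   ('a \<Rightarrow> 'a) \<Rightarrow> bool" where
  "is_aut A UA RA lt g \<longleftrightarrow> bij_betw g A A \<and>
     (\<forall>u. \<forall>x\<in>A. UA u (g x) \<longleftrightarrow> UA u x) \<and>
     (\<forall>r. \<forall>x\<in>A. \<forall>y\<in>A. RA r (g x) (g y) \<longleftrightarrow> RA r x y) \<and>
     (\<forall>x\<in>A. \<forall>y\<in>A. lt (g x) (g y) \<longleftrightarrow> lt x y)"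

definition homogeneous ::
  "'a set \<Rightarrow> ('u \<Rightarrow> 'a \<Rightarrow> bool) \<Rightarrow> ('r \<Rightarrow> 'a \<Rightarrow> 'a \<Rightarrow> bool) \<Rightarrow> ('a \<Rightarrow> 'a \<Rightarrow> bool) \<Rightarrow> bool" where
  "homogeneous A UA RA lt \<longleftrightarrow>
     (\<forall>X h. X \<subseteq> A \<and> finite X \<and> inj_on h X \<and> h ` X \<subseteq> A \<and>
        (\<forall>u. \<forall>x\<in>X. UA u (h x) \<longleftrightarrow> UA u x) \<and>
        (\<forall>r. \<forall>x\<in>X. \<forall>y\<in>X. RA r (h x) (h y) \<longleftrightarrow> RA r x y) \<and>
        (\<forall>x\<in>X. \<forall>y\<in>X. lt (h x) (h y) \<longleftrightarrow> lt x y)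
      \<longrightarrow> (\<exists>g. is_aut A UA RA lt g \<and> (\<forall>x\<in>X. g x = h x)))"

definition fraisse_limit ::
  "(nat set \<times> ('u \<Rightarrow> nat \<Rightarrow> bool) \<times> ('r \<Rightarrow> nat \<Rightarrow> nat \<Rightarrow> bool)) set \<Rightarrow>
   'a set \<Rightarrow> ('u \<Rightarrow> 'a \<Rightarrow> bool) \<Rightarrow> ('r \<Rightarrow> 'a \<Rightarrow> 'a \<Rightarrow> bool) \<Rightarrow> ('a \<Rightarrow> 'a \<Rightarrow> bool) \<Rightarrow> bool" where
  "fraisse_limit F A UA RA lt \<longleftrightarrow> countable A \<and> homogeneous A UA RA lt \<and>
     (\<forall>C U R L. finite C \<longrightarrow>
        ((\<exists>h. emb_ord C U R L A UA RA lt h) \<longleftrightarrow> in_ordK F C U R L))"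

definition aut_fix ::
  "'a set \<Rightarrow> ('u \<Rightarrow> 'a \<Rightarrow> bool) \<Rightarrow> ('r \<Rightarrow> 'a \<Rightarrow> 'a \<Rightarrow> bool) \<Rightarrow> ('a \<Rightarrow> 'a \<Rightarrow> bool) \<Rightarrow> 'a set \<Rightarrow>
   ('a \<Rightarrow> 'a) \<Rightarrow> bool" where
  "aut_fix A UA RA lt S g \<longleftrightarrow> is_aut A UA RA lt g \<and> (\<forall>s\<in>S. g s = s)"

definition S_ordered :: "'a set \<Rightarrow> ('a \<Rightarrow> 'a \<Rightarrow> bool) \<Rightarrow> 'a set \<Rightarrow> 'i::linorder set \<Rightarrow> ('i \<Rightarrow> 'a) \<Rightarrow> bool" where
  "S_ordered A lt S I a \<longleftrightarrow> a \<in> I \<rightarrow>\<^sub>E A \<and> (\<forall>i\<in>I. a i \<notin> S) \<and>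
     (\<forall>i\<in>I. \<forall>j\<in>I. i < j \<longrightarrow> lt (a i) (a j))"

definition orbit ::
  "'a set \<Rightarrow> ('u \<Rightarrow> 'a \<Rightarrow> bool) \<Rightarrow> ('r \<Rightarrow> 'a \<Rightarrow> 'a \<Rightarrow> bool) \<Rightarrow> ('a \<Rightarrow> 'a \<Rightarrow> bool) \<Rightarrow> 'a set \<Rightarrow>
   'i set \<Rightarrow> ('i \<Rightarrow> 'a) \<Rightarrow> ('i \<Rightarrow> 'a) set" where
  "orbit A UA RA lt S I a = {(\<lambda>i\<in>I. g (a i)) | g. aut_fix A UA RA lt S g}"

definition is_duo :: "('r \<Rightarrow> 'a \<Rightarrow> 'a \<Rightarrow> bool) \<Rightarrow> ('a \<Rightarrow> 'a \<Rightarrow> bool) \<Rightarrow> 'i::linorder set \<Rightarrow>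
   ('i \<Rightarrow> 'a) set \<Rightarrow> ('i \<Rightarrow> 'a) \<Rightarrow> ('i \<Rightarrow> 'a) \<Rightarrow> bool" where
  "is_duo RA lt I Orb a b \<longleftrightarrow> a \<in> Orb \<and> b \<in> Orb \<and>
     (\<forall>i\<in>I. lt (a i) (b i)) \<and>
     (\<forall>i\<in>I. \<forall>j\<in>I. i < j \<longrightarrow> lt (b i) (a j)) \<and>
     (\<forall>r. \<forall>i\<in>I. \<forall>j\<in>I.
        (RA r (a i) (b j) \<longleftrightarrow> RA r (a i) (a j)) \<and>
        (RA r (a i) (a j) \<longleftrightarrow> RA r (b i) (b j)) \<and>
        (RA r (b i) (b j) \<longleftrightarrow> RA r (b i) (a j)))"

end

theory Submission
  imports Defs
begin


lemma age_iff:
  assumes "fraisse_limit F A UA RA lt" "finite C"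
  shows "(\<exists>h. emb_ord C U R L A UA RA lt h) \<longleftrightarrow> in_ordK F C U R L"
proof -
  have "\<forall>C U R L. finite C \<longrightarrow>
        ((\<exists>h. emb_ord C U R L A UA RA lt h) \<longleftrightarrow> in_ordK F C U R L)"
    using assms(1) unfolding fraisse_limit_def by (elim conjE)
  then show ?thesis using assms(2) by (elim allE[of _ C] allE[of _ U] allE[of _ R] allE[of _ L]) (rule mp)
qed

lemma noF:
  assumes "\<forall>(C, U, R)\<in>F. finite C \<and> all_related C R" "fraisse_limit F A UA RA lt"
    "(C,U,R) \<in> F" "emb C U R A UA RA k"
  shows False
proof -
  have fin: "finite C" using assms(1,3) by auto
  have "emb_ord C U R (\<lambda>x y. lt (k x) (k y)) A UA RA lt k" using assms(4) by (simp add: emb_ord_def)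
  hence "in_ordK F C U R (\<lambda>x y. lt (k x) (k y))" using age_iff[OF assms(2) fin] by blast
  hence "in_Forb F C U R" by (simp add: in_ordK_def)
  moreover have "emb C U R C U R id" by (simp add: emb_def)
  ultimately show False using assms(3) unfolding in_Forb_def by fastforce
qed

lemma induced:
  assumes "fraisse_limit F A UA RA lt" "bij_betw f {0..<n} Y" "Y \<subseteq> A"
  shows "in_ordK F {0..<n} (\<lambda>u k. UA u (f k)) (\<lambda>r k l. RA r (f k) (f l)) (\<lambda>k l. lt (f k) (f l))"
proof -
  have "emb_ord {0..<n} (\<lambda>u k. UA u (f k)) (\<lambda>r k l. RA r (f k) (f l)) (\<lambda>k l. lt (f k) (f l)) A UA RA lt f"
    using assms(2,3) by (auto simp: emb_ord_def emb_def bij_betw_def)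
  then show ?thesis using age_iff[OF assms(1)] by blast
qed

lemma basic:
  assumes "fraisse_limit F A UA RA lt" "x\<in>A" "y\<in>A" "z\<in>A"
  shows "\<not> lt x x" "\<not> RA r x x" "lt x y \<Longrightarrow> lt y z \<Longrightarrow> lt x z" "x \<noteq> y \<Longrightarrow> lt x y \<or> lt y x"
proof -
  define C where "C = {0..<card {x,y,z}}"
  have fin: "finite {x,y,z}" by simp
  obtain f where f: "bij_betw f C {x,y,z}" using ex_bij_betw_nat_finite[OF fin] unfolding C_def by (elim exE)
  have sub: "{x,y,z} \<subseteq> A" using assms by simp
  have K: "in_ordK F C (\<lambda>u k. UA u (f k)) (\<lambda>r k l. RA r (f k) (f l)) (\<lambda>k l. lt (f k) (f l))"
    using induced[OF assms(1) f[unfolded C_def] sub] unfolding C_def .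
  have K1: "\<forall>k\<in>C. \<not> lt (f k) (f k)" using K unfolding in_ordK_def by (elim conjE)
  have KF: "in_Forb F C (\<lambda>u k. UA u (f k)) (\<lambda>r k l. RA r (f k) (f l))" using K unfolding in_ordK_def by (elim conjE)
  have K2: "\<forall>r. \<forall>k\<in>C. \<not> RA r (f k) (f k)" using KF unfolding in_Forb_def by (elim conjE)
  have K3: "\<forall>k\<in>C. \<forall>l\<in>C. \<forall>m\<in>C. lt (f k) (f l) \<and> lt (f l) (f m) \<longrightarrow> lt (f k) (f m)"
    using K unfolding in_ordK_def by (elim conjE)
  have K4: "\<forall>k\<in>C. \<forall>l\<in>C. k \<noteq> l \<longrightarrow> lt (f k) (f l) \<or> lt (f l) (f k)"
    using K unfolding in_ordK_def by (elim conjE)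
  have su: "f ` C = {x,y,z}" using f by (simp add: bij_betw_def)
  have "x \<in> f ` C" using su by simp
  then obtain kx where kx: "kx \<in> C" "x = f kx" by (rule imageE)
  have "y \<in> f ` C" using su by simp
  then obtain ky where ky: "ky \<in> C" "y = f ky" by (rule imageE)
  have "z \<in> f ` C" using su by simp
  then obtain kz where kz: "kz \<in> C" "z = f kz" by (rule imageE)
  show "\<not> lt x x" using K1 kx(1) unfolding kx(2) by blast
  show "\<not> RA r x x" using K2 kx(1) unfolding kx(2) by blast
  show "lt x y \<Longrightarrow> lt y z \<Longrightarrow> lt x z" using K3 kx(1) ky(1) kz(1) unfolding kx(2) ky(2) kz(2) by blast
  show "x \<noteq> y \<Longrightarrow> lt x y \<or> lt y x"
  proof -
    assume "x \<noteq> y"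
    then have "kx \<noteq> ky" using kx ky by auto
    then show ?thesis using K4 kx(1) ky(1) unfolding kx(2) ky(2) by blast
  qed
qed

lemma hom_use:
  assumes "homogeneous A UA RA lt" "X \<subseteq> A" "finite X" "inj_on h X" "h ` X \<subseteq> A"
    "\<forall>u. \<forall>x\<in>X. UA u (h x) \<longleftrightarrow> UA u x"
    "\<forall>r. \<forall>x\<in>X. \<forall>y\<in>X. RA r (h x) (h y) \<longleftrightarrow> RA r x y"
    "\<forall>x\<in>X. \<forall>y\<in>X. lt (h x) (h y) \<longleftrightarrow> lt x y"
  shows "\<exists>g. is_aut A UA RA lt g \<and> (\<forall>x\<in>X. g x = h x)"
proof -
  have "\<forall>X h. X \<subseteq> A \<and> finite X \<and> inj_on h X \<and> h ` X \<subseteq> A \<and>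
        (\<forall>u. \<forall>x\<in>X. UA u (h x) \<longleftrightarrow> UA u x) \<and>
        (\<forall>r. \<forall>x\<in>X. \<forall>y\<in>X. RA r (h x) (h y) \<longleftrightarrow> RA r x y) \<and>
        (\<forall>x\<in>X. \<forall>y\<in>X. lt (h x) (h y) \<longleftrightarrow> lt x y)
      \<longrightarrow> (\<exists>g. is_aut A UA RA lt g \<and> (\<forall>x\<in>X. g x = h x))"
    using assms(1) unfolding homogeneous_def .
  then have "X \<subseteq> A \<and> finite X \<and> inj_on h X \<and> h ` X \<subseteq> A \<and>
        (\<forall>u. \<forall>x\<in>X. UA u (h x) \<longleftrightarrow> UA u x) \<and>
        (\<forall>r. \<forall>x\<in>X. \<forall>y\<in>X. RA r (h x) (h y) \<longleftrightarrow> RA r x y) \<and>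
        (\<forall>x\<in>X. \<forall>y\<in>X. lt (h x) (h y) \<longleftrightarrow> lt x y)
      \<longrightarrow> (\<exists>g. is_aut A UA RA lt g \<and> (\<forall>x\<in>X. g x = h x))" by blast
  then show ?thesis using assms(2-) by blast
qed

lemma aut_in: "is_aut A UA RA lt g \<Longrightarrow> x \<in> A \<Longrightarrow> g x \<in> A"
  unfolding is_aut_def bij_betw_def by blast

lemma aut_comp: "is_aut A UA RA lt g \<Longrightarrow> is_aut A UA RA lt h \<Longrightarrow> is_aut A UA RA lt (h \<circ> g)"
proof -
  assume g: "is_aut A UA RA lt g" and h: "is_aut A UA RA lt h"
  have gA: "\<And>x. x \<in> A \<Longrightarrow> g x \<in> A" using aut_in[OF g] .
  show ?thesis unfolding is_aut_def
  proof (intro conjI ballI allI)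
    show "bij_betw (h \<circ> g) A A" using g h unfolding is_aut_def using bij_betw_trans by blast
  next
    fix u x assume "x \<in> A" then show "UA u ((h \<circ> g) x) = UA u x" using g h gA unfolding is_aut_def by simp
  next
    fix r x y assume "x \<in> A" "y \<in> A" then show "RA r ((h \<circ> g) x) ((h \<circ> g) y) = RA r x y" using g h gA unfolding is_aut_def by simp
  next
    fix x y assume "x \<in> A" "y \<in> A" then show "lt ((h \<circ> g) x) ((h \<circ> g) y) = lt x y" using g h gA unfolding is_aut_def by simp
  qed
qed


theorem mainTheorem11:
  fixes F :: "(nat set \<times> ('u::finite \<Rightarrow> nat \<Rightarrow> bool) \<times> ('r::finite \<Rightarrow> nat \<Rightarrow> nat \<Rightarrow> bool)) set"
    and A :: "'a set" and UA :: "'u \<Rightarrow> 'a \<Rightarrow> bool" and RA :: "'r \<Rightarrow> 'a \<Rightarrow> 'a \<Rightarrow> bool"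
    and lt :: "'a \<Rightarrow> 'a \<Rightarrow> bool"
    and S :: "'a set" and I :: "'i::linorder set" and a0 a :: "'i \<Rightarrow> 'a"
  assumes "\<forall>(C, U, R)\<in>F. finite C \<and> all_related C R"
    and "fraisse_limit F A UA RA lt"
    and "finite S" and "S \<subseteq> A"
    and "finite I"
    and "S_ordered A lt S I a0"
    and "a \<in> orbit A UA RA lt S I a0"
  shows "\<exists>b. is_duo RA lt I (orbit A UA RA lt S I a0) a b"
proof -
  note fl = assms(2)
  have hom: "homogeneous A UA RA lt" using fl unfolding fraisse_limit_def by (elim conjE)
  obtain g where g: "aut_fix A UA RA lt S g" and aeq: "a = (\<lambda>i\<in>I. g (a0 i))"
    using assms(7) unfolding orbit_def by blast
  have ga: "is_aut A UA RA lt g" and gS: "\<forall>s\<in>S. g s = s" using g unfolding aut_fix_def by auto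
  have a0A: "\<And>i. i \<in> I \<Longrightarrow> a0 i \<in> A" and a0S: "\<And>i. i \<in> I \<Longrightarrow> a0 i \<notin> S"
    and a0m: "\<And>i j. i \<in> I \<Longrightarrow> j \<in> I \<Longrightarrow> i < j \<Longrightarrow> lt (a0 i) (a0 j)"
    using assms(6) unfolding S_ordered_def by auto
  have ai: "\<And>i. i \<in> I \<Longrightarrow> a i = g (a0 i)" using aeq by simp
  have aA: "\<And>i. i \<in> I \<Longrightarrow> a i \<in> A" using ai a0A aut_in[OF ga] by simp
  have ginj: "inj_on g A" using ga unfolding is_aut_def bij_betw_def by blast
  have aS: "a i \<notin> S" if i: "i \<in> I" for i
  proof
    assume as: "a i \<in> S"
    then have "g (a i) = g (a0 i)" using gS ai[OF i] by simp
    then have "a i = a0 i" using ginj aA[OF i] a0A[OF i] inj_onD by metis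
    then show False using as a0S[OF i] by simp
  qed
  have amono: "\<And>i j. i \<in> I \<Longrightarrow> j \<in> I \<Longrightarrow> i < j \<Longrightarrow> lt (a i) (a j)"
    using ai a0m a0A ga unfolding is_aut_def by simp
  define X where "X = S \<union> a ` I"
  have XA: "X \<subseteq> A" using assms(4) aA unfolding X_def by auto
  have finX: "finite X" using assms(3,5) unfolding X_def by simp
  define D where "D = X \<times> (UNIV::bool set)"
  have finD: "finite D" using finX unfolding D_def by simp
  define lx :: "'a \<times> bool \<Rightarrow> 'a \<times> bool \<Rightarrow> bool"
    where "lx = (\<lambda>\<xi> \<eta>. lt (fst \<xi>) (fst \<eta>) \<or> (fst \<xi> = fst \<eta> \<and> \<not> snd \<xi> \<and> snd \<eta>))"
  define N where "N = card D"
  obtain f where f: "bij_betw f {0..<N} D" using ex_bij_betw_nat_finite[OF finD] unfolding N_def by blast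
  define U' where "U' = (\<lambda>u k. UA u (fst (f k)))"
  define R' where "R' = (\<lambda>r k l. RA r (fst (f k)) (fst (f l)))"
  define L where "L = (\<lambda>k l. lx (f k) (f l))"
  have fD: "\<And>k. k \<in> {0..<N} \<Longrightarrow> f k \<in> D" using f unfolding bij_betw_def by blast
  have fA: "\<And>k. k \<in> {0..<N} \<Longrightarrow> fst (f k) \<in> A" using fD XA unfolding D_def by (metis subsetD mem_Times_iff)
  have finj: "inj_on f {0..<N}" using f unfolding bij_betw_def by blast
  have DA: "\<And>\<xi>. \<xi> \<in> D \<Longrightarrow> fst \<xi> \<in> A" using XA unfolding D_def by auto
  have lx_irr: "\<And>\<xi>. \<xi> \<in> D \<Longrightarrow> \<not> lx \<xi> \<xi>" using basic(1)[OF fl] DA unfolding lx_def by blast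
  have lx_trans: "\<And>\<xi> \<eta> \<zeta>. \<xi> \<in> D \<Longrightarrow> \<eta> \<in> D \<Longrightarrow> \<zeta> \<in> D \<Longrightarrow> lx \<xi> \<eta> \<Longrightarrow> lx \<eta> \<zeta> \<Longrightarrow> lx \<xi> \<zeta>"
  proof -
    fix \<xi> \<eta> \<zeta> :: "'a \<times> bool"
    assume d: "\<xi> \<in> D" "\<eta> \<in> D" "\<zeta> \<in> D" and l: "lx \<xi> \<eta>" "lx \<eta> \<zeta>"
    have A3: "fst \<xi> \<in> A" "fst \<eta> \<in> A" "fst \<zeta> \<in> A" using d DA by auto
    show "lx \<xi> \<zeta>" using l basic(3)[OF fl A3] basic(1)[OF fl A3(1) A3(1) A3(1)] unfolding lx_def by auto
  qed
  have lx_tot: "\<And>\<xi> \<eta>. \<xi> \<in> D \<Longrightarrow> \<eta> \<in> D \<Longrightarrow> \<xi> \<noteq> \<eta> \<Longrightarrow> lx \<xi> \<eta> \<or> lx \<eta> \<xi>"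
  proof -
    fix \<xi> \<eta> :: "'a \<times> bool"
    assume d: "\<xi> \<in> D" "\<eta> \<in> D" and ne: "\<xi> \<noteq> \<eta>"
    have A3: "fst \<xi> \<in> A" "fst \<eta> \<in> A" using d DA by auto
    show "lx \<xi> \<eta> \<or> lx \<eta> \<xi>"
    proof (cases "fst \<xi> = fst \<eta>")
      case True
      then have "snd \<xi> \<noteq> snd \<eta>" using ne True prod_eqI by blast
      then show ?thesis using True unfolding lx_def by auto
    next
      case False
      then show ?thesis using basic(4)[OF fl A3 A3(1)] unfolding lx_def by auto
    qed
  qed
  have K: "in_ordK F {0..<N} U' R' L"
    unfolding in_ordK_def in_Forb_def
  proof (intro conjI)
    show "finite {0..<N}" by simp
    show "\<forall>r. \<forall>x\<in>{0..<N}. \<not> R' r x x" unfolding R'_def using basic(2)[OF fl] fA by blast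
    show "\<forall>(C', U'', R'')\<in>F. \<not> (\<exists>h. emb C' U'' R'' {0..<N} U' R' h)"
    proof (clarify)
      fix C' U'' R'' h
      assume mem: "(C', U'', R'') \<in> F" and e: "emb C' U'' R'' {0..<N} U' R' h"
      define k where "k = (\<lambda>x. fst (f (h x)))"
      have hN: "\<And>x. x \<in> C' \<Longrightarrow> h x \<in> {0..<N}" using e unfolding emb_def by blast
      have eR: "\<And>r x y. x \<in> C' \<Longrightarrow> y \<in> C' \<Longrightarrow> R'' r x y = RA r (k x) (k y)"
        using e unfolding emb_def R'_def k_def by blast
      have eU: "\<And>u x. x \<in> C' \<Longrightarrow> U'' u x = UA u (k x)"
        using e unfolding emb_def U'_def k_def by blast
      have ar: "all_related C' R''" using assms(1) mem by auto
      have kA: "\<And>x. x \<in> C' \<Longrightarrow> k x \<in> A" using hN fA unfolding k_def by blast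
      have "inj_on k C'"
      proof (rule inj_onI, rule ccontr)
        fix x y assume x: "x \<in> C'" and y: "y \<in> C'" and kk: "k x = k y" and ne: "x \<noteq> y"
        obtain r where "R'' r x y \<or> R'' r y x" using ar x y ne unfolding all_related_def by blast
        then show False using eR[OF x y] eR[OF y x] kk basic(2)[OF fl kA[OF x] kA[OF x] kA[OF x]] by auto
      qed
      then have "emb C' U'' R'' A UA RA k" unfolding emb_def using kA eU eR by blast
      then show False using noF[OF assms(1) fl mem] by blast
    qed
    show "\<forall>x\<in>{0..<N}. \<not> L x x" unfolding L_def using lx_irr fD by blast
    show "\<forall>x\<in>{0..<N}. \<forall>y\<in>{0..<N}. \<forall>z\<in>{0..<N}. L x y \<and> L y z \<longrightarrow> L x z"
      unfolding L_def using lx_trans fD by blast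
    show "\<forall>x\<in>{0..<N}. \<forall>y\<in>{0..<N}. x \<noteq> y \<longrightarrow> L x y \<or> L y x"
    proof (intro ballI impI)
      fix x y assume x: "x \<in> {0..<N}" and y: "y \<in> {0..<N}" and ne: "x \<noteq> y"
      have "f x \<noteq> f y" using finj x y ne inj_onD by metis
      then show "L x y \<or> L y x" unfolding L_def using lx_tot fD x y by blast
    qed
  qed
  obtain e where e: "emb_ord {0..<N} U' R' L A UA RA lt e"
    using age_iff[OF fl, of "{0..<N}"] K by blast
  define finv where "finv = inv_into {0..<N} f"
  have finvN: "\<And>\<xi>. \<xi> \<in> D \<Longrightarrow> finv \<xi> \<in> {0..<N}" and finvf: "\<And>\<xi>. \<xi> \<in> D \<Longrightarrow> f (finv \<xi>) = \<xi>"
    using f unfolding finv_def bij_betw_def by (auto intro: inv_into_into f_inv_into_f)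
  define p where "p = (\<lambda>\<xi>. e (finv \<xi>))"
  have eA: "\<And>k. k \<in> {0..<N} \<Longrightarrow> e k \<in> A" using e unfolding emb_ord_def emb_def by blast
  have pA: "\<And>\<xi>. \<xi> \<in> D \<Longrightarrow> p \<xi> \<in> A" using eA finvN unfolding p_def by blast
  have einj: "inj_on e {0..<N}" using e unfolding emb_ord_def emb_def by blast
  have pinj: "inj_on p D"
  proof (rule inj_onI)
    fix \<xi> \<eta> assume d: "\<xi> \<in> D" "\<eta> \<in> D" and pe: "p \<xi> = p \<eta>"
    have "inj_on e {0..<N}" by (rule einj)
    then have "finv \<xi> = finv \<eta>" using pe d finvN unfolding p_def by (meson inj_onD)
    then show "\<xi> = \<eta>" using finvf d by metis
  qed
  have eU: "\<forall>u. \<forall>x\<in>{0..<N}. U' u x \<longleftrightarrow> UA u (e x)" using e unfolding emb_ord_def emb_def by blast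
  have eR: "\<forall>r. \<forall>x\<in>{0..<N}. \<forall>y\<in>{0..<N}. R' r x y \<longleftrightarrow> RA r (e x) (e y)"
    using e unfolding emb_ord_def emb_def by blast
  have eL: "\<forall>x\<in>{0..<N}. \<forall>y\<in>{0..<N}. L x y \<longleftrightarrow> lt (e x) (e y)"
    using e unfolding emb_ord_def by blast
  have pU: "\<And>u \<xi>. \<xi> \<in> D \<Longrightarrow> UA u (p \<xi>) = UA u (fst \<xi>)"
  proof -
    fix u \<xi> assume d: "\<xi> \<in> D"
    have "U' u (finv \<xi>) \<longleftrightarrow> UA u (e (finv \<xi>))" using eU finvN[OF d] by blast
    then show "UA u (p \<xi>) = UA u (fst \<xi>)" using finvf[OF d] unfolding p_def U'_def by simp
  qed
  have pR: "\<And>r \<xi> \<eta>. \<xi> \<in> D \<Longrightarrow> \<eta> \<in> D \<Longrightarrow> RA r (p \<xi>) (p \<eta>) = RA r (fst \<xi>) (fst \<eta>)"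
  proof -
    fix r \<xi> \<eta> assume d: "\<xi> \<in> D" "\<eta> \<in> D"
    have "R' r (finv \<xi>) (finv \<eta>) \<longleftrightarrow> RA r (e (finv \<xi>)) (e (finv \<eta>))"
      using eR finvN[OF d(1)] finvN[OF d(2)] by blast
    then show "RA r (p \<xi>) (p \<eta>) = RA r (fst \<xi>) (fst \<eta>)"
      using finvf[OF d(1)] finvf[OF d(2)] unfolding p_def R'_def by simp
  qed
  have pL: "\<And>\<xi> \<eta>. \<xi> \<in> D \<Longrightarrow> \<eta> \<in> D \<Longrightarrow> lt (p \<xi>) (p \<eta>) = lx \<xi> \<eta>"
  proof -
    fix \<xi> \<eta> assume d: "\<xi> \<in> D" "\<eta> \<in> D"
    have "L (finv \<xi>) (finv \<eta>) \<longleftrightarrow> lt (e (finv \<xi>)) (e (finv \<eta>))"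
      using eL finvN[OF d(1)] finvN[OF d(2)] by blast
    then show "lt (p \<xi>) (p \<eta>) = lx \<xi> \<eta>"
      using finvf[OF d(1)] finvf[OF d(2)] unfolding p_def L_def by simp
  qed
  have XD: "\<And>x c. x \<in> X \<Longrightarrow> (x, c) \<in> D" unfolding D_def by simp
  define X1 where "X1 = (\<lambda>x. p (x, False)) ` X"
  define h1 where "h1 = (\<lambda>z. fst (inv_into D p z))"
  have h1p: "\<And>x. x \<in> X \<Longrightarrow> h1 (p (x, False)) = x"
    unfolding h1_def using inv_into_f_f[OF pinj] XD by simp
  have "\<exists>G. is_aut A UA RA lt G \<and> (\<forall>z\<in>X1. G z = h1 z)"
  proof -
    have c1: "X1 \<subseteq> A" unfolding X1_def using pA XD by blast
    have c2: "finite X1" unfolding X1_def using finX by simp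
    have c3: "inj_on h1 X1" unfolding X1_def by (rule inj_onI) (auto simp: h1p)
    have c4: "h1 ` X1 \<subseteq> A" unfolding X1_def using h1p XA by auto
    have c5: "\<forall>u. \<forall>x\<in>X1. UA u (h1 x) \<longleftrightarrow> UA u x" unfolding X1_def using h1p pU XD by auto
    have c6: "\<forall>r. \<forall>x\<in>X1. \<forall>y\<in>X1. RA r (h1 x) (h1 y) \<longleftrightarrow> RA r x y" unfolding X1_def using h1p pR XD by auto
    have c7: "\<forall>x\<in>X1. \<forall>y\<in>X1. lt (h1 x) (h1 y) \<longleftrightarrow> lt x y" unfolding X1_def using h1p pL XD
      unfolding lx_def by auto
    show ?thesis using hom_use[OF hom c1 c2 c3 c4 c5 c6 c7] .
  qed
  then obtain G where G: "is_aut A UA RA lt G" and GX: "\<forall>z\<in>X1. G z = h1 z" by blast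
  define q where "q = (\<lambda>\<xi>. G (p \<xi>))"
  have qF: "\<And>x. x \<in> X \<Longrightarrow> q (x, False) = x" unfolding q_def using GX h1p unfolding X1_def by auto
  have qA: "\<And>\<xi>. \<xi> \<in> D \<Longrightarrow> q \<xi> \<in> A" unfolding q_def using aut_in[OF G] pA by blast
  have Ginj: "inj_on G A" using G unfolding is_aut_def bij_betw_def by blast
  have qinj: "inj_on q D" unfolding q_def using pinj Ginj pA by (simp add: inj_on_def)
  have qU: "\<And>u \<xi>. \<xi> \<in> D \<Longrightarrow> UA u (q \<xi>) = UA u (fst \<xi>)"
    unfolding q_def using G pA pU unfolding is_aut_def by simp
  have qR: "\<And>r \<xi> \<eta>. \<xi> \<in> D \<Longrightarrow> \<eta> \<in> D \<Longrightarrow> RA r (q \<xi>) (q \<eta>) = RA r (fst \<xi>) (fst \<eta>)"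
    unfolding q_def using G pA pR unfolding is_aut_def by simp
  have qL: "\<And>\<xi> \<eta>. \<xi> \<in> D \<Longrightarrow> \<eta> \<in> D \<Longrightarrow> lt (q \<xi>) (q \<eta>) = lx \<xi> \<eta>"
    unfolding q_def using G pA pL unfolding is_aut_def by simp
  define b where "b = (\<lambda>i\<in>I. q (a i, True))"
  define h2 where "h2 = (\<lambda>z. q (z, z \<notin> S))"
  have h2S: "\<And>s. s \<in> S \<Longrightarrow> h2 s = s" unfolding h2_def using qF unfolding X_def by auto
  have "\<exists>H. is_aut A UA RA lt H \<and> (\<forall>z\<in>X. H z = h2 z)"
  proof -
    have c3: "inj_on h2 X"
    proof (rule inj_onI)
      fix x y assume "x \<in> X" "y \<in> X" "h2 x = h2 y"
      then have "(x, x \<notin> S) = (y, y \<notin> S)" using qinj XD unfolding h2_def by (meson inj_onD)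
      then show "x = y" by simp
    qed
    have c4: "h2 ` X \<subseteq> A" unfolding h2_def using qA XD by auto
    have c5: "\<forall>u. \<forall>x\<in>X. UA u (h2 x) \<longleftrightarrow> UA u x" unfolding h2_def using qU XD by auto
    have c6: "\<forall>r. \<forall>x\<in>X. \<forall>y\<in>X. RA r (h2 x) (h2 y) \<longleftrightarrow> RA r x y" unfolding h2_def using qR XD by auto
    have c7: "\<forall>x\<in>X. \<forall>y\<in>X. lt (h2 x) (h2 y) \<longleftrightarrow> lt x y" unfolding h2_def using qL XD
      unfolding lx_def by auto
    show ?thesis using hom_use[OF hom XA finX c3 c4 c5 c6 c7] .
  qed
  then obtain H where H: "is_aut A UA RA lt H" and HX: "\<forall>z\<in>X. H z = h2 z" by blast
  have HS: "\<forall>s\<in>S. H s = s" using HX h2S unfolding X_def by auto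
  have Ha: "\<And>i. i \<in> I \<Longrightarrow> H (a i) = b i" using HX aS unfolding h2_def b_def X_def by auto
  have borb: "b \<in> orbit A UA RA lt S I a0"
  proof -
    have "aut_fix A UA RA lt S (H \<circ> g)" unfolding aut_fix_def using aut_comp[OF ga H] gS HS by simp
    moreover have "b = (\<lambda>i\<in>I. (H \<circ> g) (a0 i))"
    proof
      fix i show "b i = (\<lambda>i\<in>I. (H \<circ> g) (a0 i)) i"
        using Ha ai unfolding b_def by (cases "i \<in> I") auto
    qed
    ultimately show ?thesis unfolding orbit_def by blast
  qed
  have aX: "\<And>i. i \<in> I \<Longrightarrow> a i \<in> X" unfolding X_def by simp
  have qa: "\<And>i. i \<in> I \<Longrightarrow> q (a i, False) = a i" using qF aX by simp
  have bq: "\<And>i. i \<in> I \<Longrightarrow> b i = q (a i, True)" unfolding b_def by simp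
  have aD: "\<And>i c. i \<in> I \<Longrightarrow> (a i, c) \<in> D" using XD aX by simp
  show ?thesis
  proof (rule exI[of _ b], unfold is_duo_def, intro conjI)
    show "a \<in> orbit A UA RA lt S I a0" by (rule assms(7))
    show "b \<in> orbit A UA RA lt S I a0" by (rule borb)
    show "\<forall>i\<in>I. lt (a i) (b i)"
    proof
      fix i assume i: "i \<in> I"
      have "lt (q (a i, False)) (q (a i, True))" using qL[OF aD[OF i] aD[OF i]] unfolding lx_def by simp
      then show "lt (a i) (b i)" using qa[OF i] bq[OF i] by simp
    qed
    show "\<forall>i\<in>I. \<forall>j\<in>I. i < j \<longrightarrow> lt (b i) (a j)"
    proof (intro ballI impI)
      fix i j assume i: "i \<in> I" and j: "j \<in> I" and ij: "i < j"
      have "lt (q (a i, True)) (q (a j, False))" using qL[OF aD[OF i] aD[OF j]] amono[OF i j ij]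
        unfolding lx_def by simp
      then show "lt (b i) (a j)" using qa[OF j] bq[OF i] by simp
    qed
    show "\<forall>r. \<forall>i\<in>I. \<forall>j\<in>I. (RA r (a i) (b j) \<longleftrightarrow> RA r (a i) (a j)) \<and>
        (RA r (a i) (a j) \<longleftrightarrow> RA r (b i) (b j)) \<and> (RA r (b i) (b j) \<longleftrightarrow> RA r (b i) (a j))"
    proof (intro allI ballI)
      fix r i j assume i: "i \<in> I" and j: "j \<in> I"
      have e1: "RA r (a i) (b j) = RA r (a i) (a j)"
        using qR[where r=r, OF aD[OF i, of False] aD[OF j, of True]] qa[OF i] bq[OF j] by simp
      have e2: "RA r (b i) (b j) = RA r (a i) (a j)"
        using qR[where r=r, OF aD[OF i, of True] aD[OF j, of True]] bq[OF i] bq[OF j] by simp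
      have e3: "RA r (b i) (a j) = RA r (a i) (a j)"
        using qR[where r=r, OF aD[OF i, of True] aD[OF j, of False]] bq[OF i] qa[OF j] by simp
      show "(RA r (a i) (b j) \<longleftrightarrow> RA r (a i) (a j)) \<and>
        (RA r (a i) (a j) \<longleftrightarrow> RA r (b i) (b j)) \<and> (RA r (b i) (b j) \<longleftrightarrow> RA r (b i) (a j))"
        using e1 e2 e3 by simp
    qed
  qed
qed

end
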